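(* Let $q\in(0,1]$ and $x,y\in[0,q]$. If $|x-y|\le q/e^2$, then $|\chi(x\|q)-\chi(y\|q)|\le\chi(|x-y|\,\|\,q)$.
   Context: For $q>0$, $\chi(x\|q)=x\log_2^2(x/q)$ for $x\in(0,1]$, extended by continuity with $\chi(0\|q)=0$. *)

theory Defs
  imports "HOL-Analysis.Analysis"
begin

definition chi :: "real \<Rightarrow> real \<Rightarrow> real" where
  "chi x q = (if x = 0 then 0 else x * (log 2 (x / q))^2)"

end

theory Submission
  imports Defs
begin

definition GG :: "real \<Rightarrow> real \<Rightarrow> real" where
  "GG q x = x * (ln x - ln q)^2"

definition dG :: "real \<Rightarrow> real \<Rightarrow> real" where
  "dG q x = (ln x - ln q)^2 + 2 * (ln x - ln q)"

lemma derivG: "x > 0 \<Longrightarrow> (GG q has_real_derivative dG q x) (at x)"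
  unfolding GG_def dG_def
  by (auto intro!: derivative_eq_intros simp: field_simps power2_eq_square)

lemma mvtG:
  assumes "0 < a" "a < b"
  shows "\<exists>z. a < z \<and> z < b \<and> GG q b - GG q a = (b - a) * dG q z"
  using MVT2[of a b "GG q" "dG q"] derivG assms by force

lemma dG_ge: "dG q x \<ge> -1"
proof -
  have "dG q x = (ln x - ln q + 1)^2 - 1" by (simp add: dG_def power2_eq_square algebra_simps)
  thus ?thesis by simp
qed

lemma lnle: fixes q x c :: real assumes "0 < q" "0 < x" "x \<le> q / exp c" shows "ln x - ln q \<le> -c"
proof -
  have "ln x \<le> ln (q / exp c)" by (rule ln_mono) (use assms in auto)
  also have "\<dots> = ln q - c" using assms by (simp add: ln_div)
  finally show ?thesis by simp
qed

lemma lnge: fixes q x c :: real assumes "0 < q" "0 < x" "x \<ge> q / exp c" shows "ln x - ln q \<ge> -c"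
proof -
  have "ln x \<ge> ln (q / exp c)" by (rule ln_mono) (use assms in auto)
  also have "ln (q / exp c) = ln q - c" using assms by (simp add: ln_div)
  finally show ?thesis by simp
qed

lemma dG_mono:
  assumes "0 < q" "0 < a" "a \<le> b" "b \<le> q / exp 1"
  shows "dG q b \<le> dG q a"
proof -
  have "ln b - ln q \<le> -1" using lnle[of q b 1] assms by simp
  moreover have "ln a \<le> ln b" using assms by simp
  ultimately have "(-(ln b - ln q + 1))^2 \<le> (-(ln a - ln q + 1))^2"
    by (intro power_mono) auto
  hence "(ln b - ln q + 1)^2 \<le> (ln a - ln q + 1)^2" by (simp only: power2_minus)
  moreover have "dG q x = (ln x - ln q + 1)^2 - 1" for x by (simp add: dG_def power2_eq_square algebra_simps)
  ultimately show ?thesis by simp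
qed

lemma GG_ge_d: assumes "0 < q" "0 < d" "d \<le> q" shows "d * dG q d \<le> GG q d"
proof -
  have "ln d - ln q \<le> 0" using assms by simp
  hence "d * (2 * (ln d - ln q)) \<le> 0" using assms by (simp add: mult_nonneg_nonpos)
  thus ?thesis unfolding GG_def dG_def by (simp add: algebra_simps)
qed

lemma GG_nonneg: "x \<ge> 0 \<Longrightarrow> GG q x \<ge> 0"
  unfolding GG_def by simp

lemma exp2: "2 * (q / exp 2) \<le> q / exp 1" if "q > 0" for q :: real
proof -
  have e: "exp (2::real) = exp 1 * exp 1" by (simp flip: exp_add)
  have "2 \<le> exp (1::real)" using exp_ge_add_one_self[of 1] by simp
  hence "2 * exp 1 \<le> exp 1 * exp (1::real)" by simp
  hence "2 / exp 2 \<le> 1 / exp (1::real)" unfolding e by (simp add: field_simps)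
  thus ?thesis using that by (simp add: field_simps)
qed

lemma key:
  fixes q s t :: real
  assumes q: "0 < q" and s0: "0 \<le> s" and st: "s < t" and tq: "t \<le> q" and d2: "t - s \<le> q / exp 2"
  shows "\<bar>(if t = 0 then 0 else GG q t) - (if s = 0 then 0 else GG q s)\<bar> \<le> GG q (t - s)"
proof (cases "s = 0")
  case True
  thus ?thesis using st GG_nonneg[of t q] by simp
next
  case False
  define d where "d = t - s"
  have s: "s > 0" using False s0 by simp
  have d: "d > 0" "d \<le> q" "d \<le> q / exp 2" using st tq s d2 by (auto simp: d_def)
  have t0: "t \<noteq> 0" using s st by simp
  obtain z where z: "s < z" "z < t" "GG q t - GG q s = d * dG q z"
    using mvtG[OF s st, of q] unfolding d_def by blast
  have Ld: "ln d - ln q \<le> -2" using lnle[of q d 2] d q by simp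
  have "d * 1 \<le> d * (ln d - ln q)^2"
  proof (rule mult_left_mono)
    have "(2::real)^2 \<le> (-(ln d - ln q))^2" by (rule power_mono) (use Ld in auto)
    thus "1 \<le> (ln d - ln q)^2" using power2_commute[of "ln d" "ln q"] by simp
  qed (use d in simp)
  hence dGd: "d \<le> GG q d" unfolding GG_def by simp
  have lower: "GG q s - GG q t \<le> GG q d"
  proof -
    have "d * (-1) \<le> d * dG q z" by (rule mult_left_mono) (use dG_ge d in auto)
    thus ?thesis using z dGd by simp
  qed
  have upper: "GG q t - GG q s \<le> GG q d"
  proof (cases "s \<ge> q / exp 2")
    case True
    have "ln z - ln q \<ge> -2" using lnge[of q z 2] q z True s by simp
    moreover have "ln z - ln q \<le> 0" using z tq s by simp
    ultimately have "(ln z - ln q) * (ln z - ln q + 2) \<le> 0"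
      by (intro mult_nonpos_nonneg) auto
    hence "dG q z \<le> 0" unfolding dG_def by (simp add: power2_eq_square algebra_simps)
    hence "d * dG q z \<le> 0" using d by (simp add: mult_nonneg_nonpos)
    thus ?thesis using z GG_nonneg[of d q] d by simp
  next
    case False
    have te: "t \<le> q / exp 1" using exp2[OF q] False d2 by simp
    show ?thesis
    proof (cases "d \<le> s")
      case True
      have "dG q z \<le> dG q d" by (rule dG_mono) (use q d True z te in auto)
      hence "d * dG q z \<le> d * dG q d" using d by simp
      thus ?thesis using z GG_ge_d[OF q d(1) d(2)] by simp
    next
      case False
      have dt: "d < t" using s by (simp add: d_def)
      obtain w where w: "d < w" "w < t" "GG q t - GG q d = (t - d) * dG q w"
        using mvtG[OF d(1) dt, of q] by blast
      have "dG q w \<le> dG q s" by (rule dG_mono) (use q s False w te in auto)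
      hence m: "s * dG q w \<le> s * dG q s" using s by (simp add: mult_left_mono)
      have "t - d = s" by (simp add: d_def)
      thus ?thesis using m w(3) GG_ge_d[OF q s] s st tq by (metis (no_types, lifting) add.commute diff_add_cancel diff_le_eq order.trans less_imp_le)
    qed
  qed
  show ?thesis using lower upper t0 False unfolding d_def by (simp add: abs_le_iff)
qed

lemma chi_GG: "x \<ge> 0 \<Longrightarrow> q > 0 \<Longrightarrow> chi x q = (if x = 0 then 0 else GG q x) / (ln 2)^2"
  unfolding chi_def GG_def log_def by (simp add: ln_div power_divide)

theorem lemma26:
  fixes q x y :: real
  assumes "0 < q" "q \<le> 1"
    and "0 \<le> x" "x \<le> q" "0 \<le> y" "y \<le> q"
    and "\<bar>x - y\<bar> \<le> q / exp 2"
  shows "\<bar>chi x q - chi y q\<bar> \<le> chi \<bar>x - y\<bar> q"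
proof -
  let ?F = "\<lambda>x. if x = 0 then 0 else GG q x"
  have gen: "\<bar>?F a - ?F b\<bar> \<le> ?F \<bar>a - b\<bar>" if "0 \<le> a" "a \<le> q" "0 \<le> b" "b \<le> q"
     "\<bar>a - b\<bar> \<le> q / exp 2" for a b
  proof -
    consider "a < b" | "a = b" | "b < a" by linarith
    thus ?thesis
    proof cases
      case 1
      thus ?thesis using key[of q a b] that assms(1) by (simp add: abs_minus_commute)
    next
      case 3
      thus ?thesis using key[of q b a] that assms(1) by simp
    qed simp
  qed
  have l2: "(ln 2)^2 > (0::real)" by simp
  have "\<bar>chi x q - chi y q\<bar> = \<bar>?F x - ?F y\<bar> / (ln 2)^2"
    using chi_GG[of x q] chi_GG[of y q] assms by (auto simp flip: diff_divide_distrib simp: abs_divide)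
  also have "\<dots> \<le> ?F \<bar>x - y\<bar> / (ln 2)^2"
    by (rule divide_right_mono) (use gen[of x y] assms in auto)
  also have "\<dots> = chi \<bar>x - y\<bar> q" using chi_GG[of "\<bar>x - y\<bar>" q] assms by simp
  finally show ?thesis .
qed

end
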